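(* Let $d\in\mathbb{N}$ and let $C(d)$ be a constant such that for every Radon log-concave probability measure $\mu$ on a locally convex space $E$, every $f\in\mathcal{P}^d(\mu)$ and every $\varphi\in C_b^\infty(\mathbb{R})$ with $\|\varphi\|_\infty\le1$ one has $\sigma_f^{1/d}\int\varphi'(f)\,d\mu\le C(d)\|\varphi'\|_\infty^{1-1/d}$. Let $\mu$ be a Radon log-concave probability measure on a locally convex space $E$ and let $f\in\mathcal{P}^d(\mu)$ be not a.e. equal to a constant, and let $\rho_f$ be the density of $\mu\circ f^{-1}$ with respect to Lebesgue measure. Then $\rho_f\in L^p(\mathbb{R})$ whenever $1<p<\frac{d}{d-1}$, and $$\sigma_f^{1-1/p}\|\rho_f\|_{L^p(\mathbb{R})}\le C_1(d,p),\qquad C_1(d,p)=\Bigl(p(p-1)^{-1}+p\Bigl(\frac{d}{d-1}-p\Bigr)^{-1}\Bigr)^{1/p}C(d)^{d(1-1/p)}.$$ (For $d=1$, $\frac{d}{d-1}$ is interpreted as $+\infty$ and the term $p(\frac{d}{d-1}-p)^{-1}$ as $0$.)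
   Context: Log-concave measures on $\mathbb{R}^n$: density $e^{-V}$ w.r.t. Lebesgue measure on an affine subspace, $V$ convex with values in $(-\infty,+\infty]$. A Radon probability measure on a locally convex space $E$ is log-concave if all its images under continuous linear maps to $\mathbb{R}^n$ are log-concave. $\mathcal{P}^d(\mu)$: closure in $L^2(\mu)$ of the functions $p(\ell_1,\dots,\ell_n)$ with $\ell_i\in E^*$ and $p$ a polynomial on $\mathbb{R}^n$ of degree $d$. $\sigma_f^2=\int(f-\int f\,d\mu)^2d\mu$. $C_b^\infty(\mathbb{R})$: bounded smooth functions with bounded derivatives of all orders; $\|\varphi\|_\infty=\sup|\varphi|$. *)

theory Defs
  imports "HOL-Analysis.Analysis" "HOL-Probability.Probability"
begin

class locally_convex_space = real_vector + t2_space +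
  assumes lcs_add_continuous: "\<And>(x::'a) y U. open U \<Longrightarrow> x + y \<in> U \<Longrightarrow>
      \<exists>V W. open V \<and> open W \<and> x \<in> V \<and> y \<in> W \<and> (\<forall>a\<in>V. \<forall>b\<in>W. a + b \<in> U)"
  and lcs_scale_continuous: "\<And>(t::real) (x::'a) U. open U \<Longrightarrow> t *\<^sub>R x \<in> U \<Longrightarrow>
      \<exists>e>0. \<exists>V. open V \<and> x \<in> V \<and> (\<forall>s a. \<bar>s - t\<bar> < e \<and> a \<in> V \<longrightarrow> s *\<^sub>R a \<in> U)"
  and lcs_convex_nhds: "\<And>U. open U \<Longrightarrow> (0::'a) \<in> U \<Longrightarrow> \<exists>V. open V \<and> 0 \<in> V \<and> V \<subseteq> U \<and>
         (\<forall>a\<in>V. \<forall>b\<in>V. \<forall>t::real. 0 \<le> t \<and> t \<le> 1 \<longrightarrow> t *\<^sub>R a + (1 - t) *\<^sub>R b \<in> V)"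

definition dual_space :: "('a::locally_convex_space \<Rightarrow> real) set" where
  "dual_space = {l. linear l \<and> continuous_on UNIV l}"

definition radon_measure :: "'a::topological_space measure \<Rightarrow> bool" where
  "radon_measure M \<longleftrightarrow> sets M = sets borel \<and>
     (\<forall>A\<in>sets M. emeasure M A = (SUP K\<in>{K. compact K \<and> K \<subseteq> A}. emeasure M K))"

text \<open>R^n represented as extensional functions on {..<n}, with Lebesgue measure.\<close>
definition lebesgue_fd :: "nat \<Rightarrow> (nat \<Rightarrow> real) measure" where
  "lebesgue_fd n = PiM {..<n} (\<lambda>_. lborel)"

definition convex_ereal_fd :: "nat \<Rightarrow> ((nat \<Rightarrow> real) \<Rightarrow> ereal) \<Rightarrow> bool" where
  "convex_ereal_fd k V \<longleftrightarrow> (\<forall>x. V x \<noteq> -\<infinity>) \<and>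
     (\<forall>x\<in>space (lebesgue_fd k). \<forall>y\<in>space (lebesgue_fd k). \<forall>t::real. 0 \<le> t \<and> t \<le> 1 \<longrightarrow>
        V (\<lambda>i\<in>{..<k}. t * x i + (1 - t) * y i) \<le> ereal t * V x + ereal (1 - t) * V y)"

text \<open>Log-concave measures on R^n: density e^{-V} (V convex with values in (-inf,+inf])
  w.r.t. Lebesgue measure on an affine subspace, the latter being the image of Lebesgue
  measure on R^k under an injective affine map (normalisation absorbed in V).\<close>
definition log_concave_fd :: "nat \<Rightarrow> (nat \<Rightarrow> real) measure \<Rightarrow> bool" where
  "log_concave_fd n \<mu> \<longleftrightarrow>
     (\<exists>k (a::nat \<Rightarrow> real) (A::nat \<Rightarrow> nat \<Rightarrow> real) V.
        k \<le> n \<and> convex_ereal_fd k V \<and>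
        inj_on (\<lambda>x. \<lambda>i\<in>{..<n}. a i + (\<Sum>j<k. A i j * x j)) (space (lebesgue_fd k)) \<and>
        \<mu> = distr (density (lebesgue_fd k)
                      (\<lambda>x. if V x = \<infinity> then 0 else ennreal (exp (- real_of_ereal (V x)))))
                   (lebesgue_fd n) (\<lambda>x. \<lambda>i\<in>{..<n}. a i + (\<Sum>j<k. A i j * x j)))"

definition log_concave :: "'a::locally_convex_space measure \<Rightarrow> bool" where
  "log_concave M \<longleftrightarrow>
     (\<forall>n (l::nat \<Rightarrow> 'a \<Rightarrow> real). (\<forall>i<n. l i \<in> dual_space) \<longrightarrow>
        log_concave_fd n (distr M (lebesgue_fd n) (\<lambda>x. \<lambda>i\<in>{..<n}. l i x)))"

definition poly_functions :: "nat \<Rightarrow> ('a::locally_convex_space \<Rightarrow> real) set" where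
  "poly_functions d = {g. \<exists>n (l::nat \<Rightarrow> 'a \<Rightarrow> real) (S::(nat \<Rightarrow> nat) set) c.
      (\<forall>i<n. l i \<in> dual_space) \<and> finite S \<and> (\<forall>\<alpha>\<in>S. (\<Sum>i<n. \<alpha> i) \<le> d) \<and>
      g = (\<lambda>x. \<Sum>\<alpha>\<in>S. c \<alpha> * (\<Prod>i<n. (l i x) ^ (\<alpha> i)))}"

definition Pd :: "'a::locally_convex_space measure \<Rightarrow> nat \<Rightarrow> ('a \<Rightarrow> real) set" where
  "Pd M d = {f. f \<in> borel_measurable M \<and> integrable M (\<lambda>x. (f x)\<^sup>2) \<and>
      (\<exists>g::nat \<Rightarrow> 'a \<Rightarrow> real. (\<forall>k. g k \<in> poly_functions d) \<and>
         (\<forall>k. integrable M (\<lambda>x. (f x - g k x)\<^sup>2)) \<and>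
         (\<lambda>k. \<integral>x. (f x - g k x)\<^sup>2 \<partial>M) \<longlonglongrightarrow> 0)}"

definition sigma_f :: "'a measure \<Rightarrow> ('a \<Rightarrow> real) \<Rightarrow> real" where
  "sigma_f M f = sqrt (\<integral>x. (f x - (\<integral>y. f y \<partial>M))\<^sup>2 \<partial>M)"

definition Cb_inf :: "(real \<Rightarrow> real) \<Rightarrow> bool" where
  "Cb_inf \<phi> \<longleftrightarrow> (\<forall>k. (\<forall>x. ((deriv ^^ k) \<phi>) differentiable (at x)) \<and> bounded (range ((deriv ^^ k) \<phi>)))"

definition sup_norm :: "(real \<Rightarrow> real) \<Rightarrow> real" where
  "sup_norm \<phi> = (SUP x. \<bar>\<phi> x\<bar>)"

end

theory Submission
  imports Defs "HOL-Computational_Algebra.Polynomial"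
begin


inductive tp :: "(real \<Rightarrow> real) \<Rightarrow> bool" where
  tp_base: "tp (\<lambda>x. poly P (tanh (a * x + b)))"
| tp_zero: "tp (\<lambda>x. 0)"
| tp_add: "tp g \<Longrightarrow> tp h \<Longrightarrow> tp (\<lambda>x. g x + h x)"

lemma poly_bound_unit:
  fixes P :: "real poly"
  assumes "\<bar>t\<bar> \<le> 1"
  shows "\<bar>poly P t\<bar> \<le> (\<Sum>i\<le>degree P. \<bar>coeff P i\<bar>)"
proof -
  have "\<bar>poly P t\<bar> = \<bar>\<Sum>i\<le>degree P. coeff P i * t ^ i\<bar>" by (simp add: poly_altdef)
  also have "\<dots> \<le> (\<Sum>i\<le>degree P. \<bar>coeff P i * t ^ i\<bar>)" by (rule sum_abs)
  also have "\<dots> \<le> (\<Sum>i\<le>degree P. \<bar>coeff P i\<bar>)"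
  proof (rule sum_mono)
    fix i assume "i \<in> {..degree P}"
    have "\<bar>t ^ i\<bar> \<le> 1" using assms by (simp add: power_abs power_le_one)
    then show "\<bar>coeff P i * t ^ i\<bar> \<le> \<bar>coeff P i\<bar>"
      by (simp add: abs_mult mult_left_le)
  qed
  finally show ?thesis .
qed

lemma tp_bounded: "tp g \<Longrightarrow> \<exists>B. \<forall>x. \<bar>g x\<bar> \<le> B"
proof (induction rule: tp.induct)
  case (tp_base P a b)
  show ?case
  proof (intro exI allI)
    fix x
    have "\<bar>tanh (a * x + b)\<bar> \<le> 1" using tanh_real_bounds[of "a*x+b"] by auto
    then show "\<bar>poly P (tanh (a * x + b))\<bar> \<le> (\<Sum>i\<le>degree P. \<bar>coeff P i\<bar>)"
      by (rule poly_bound_unit)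
  qed
next
  case tp_zero then show ?case by auto
next
  case (tp_add g h)
  then obtain B1 B2 where "\<forall>x. \<bar>g x\<bar> \<le> B1" "\<forall>x. \<bar>h x\<bar> \<le> B2" by auto
  then show ?case by (intro exI[of _ "B1+B2"]) (auto intro: abs_triangle_ineq[THEN order_trans] add_mono)
qed

lemma tp_deriv_ex: "tp g \<Longrightarrow> \<exists>g'. (\<forall>x. (g has_real_derivative g' x) (at x)) \<and> tp g'"
proof (induction rule: tp.induct)
  case (tp_base P a b)
  define Q where "Q = smult a (pderiv P * [:1,0,-1:])"
  have "((\<lambda>x. poly P (tanh (a * x + b))) has_real_derivative poly Q (tanh (a * x + b))) (at x)" for x
  proof -
    have "((\<lambda>x. poly P (tanh (a * x + b))) has_real_derivative
          poly (pderiv P) (tanh (a * x + b)) * ((1 - tanh (a * x + b) ^ 2) * (a * 1 + 0))) (at x)"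
      by (rule DERIV_chain2[OF poly_DERIV]) (auto intro!: derivative_eq_intros)
    moreover have "poly (pderiv P) (tanh (a * x + b)) * ((1 - tanh (a * x + b) ^ 2) * (a * 1 + 0))
       = poly Q (tanh (a * x + b))"
      by (simp add: Q_def power2_eq_square algebra_simps)
    ultimately show ?thesis by simp
  qed
  then show ?case by (intro exI[of _ "\<lambda>x. poly Q (tanh (a * x + b))"]) (auto intro: tp.intros)
next
  case tp_zero then show ?case by (auto intro!: exI[of _ "\<lambda>x. 0"] tp.intros)
next
  case (tp_add g h)
  then obtain g' h' where "\<forall>x. (g has_real_derivative g' x) (at x)" "tp g'"
     "\<forall>x. (h has_real_derivative h' x) (at x)" "tp h'" by auto
  then show ?case by (intro exI[of _ "\<lambda>x. g' x + h' x"]) (auto intro!: derivative_eq_intros tp.intros)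
qed

lemma tp_deriv: "tp g \<Longrightarrow> tp (deriv g)"
proof -
  assume "tp g"
  then obtain g' where d: "\<forall>x. (g has_real_derivative g' x) (at x)" and "tp g'"
    using tp_deriv_ex by blast
  have "deriv g = g'" using d by (auto intro!: ext DERIV_imp_deriv)
  then show ?thesis using \<open>tp g'\<close> by simp
qed

lemma tp_differentiable: "tp g \<Longrightarrow> g differentiable (at x)"
  using tp_deriv_ex real_differentiable_def by blast

lemma tp_funpow: "tp g \<Longrightarrow> tp ((deriv ^^ k) g)"
  by (induction k) (auto intro: tp_deriv)

lemma tp_scale: "tp g \<Longrightarrow> tp (\<lambda>x. c * g x)"
proof (induction rule: tp.induct)
  case (tp_base P a b)
  have "tp (\<lambda>x. poly (smult c P) (tanh (a * x + b)))" by (rule tp.intros)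
  then show ?case by simp
next
  case tp_zero then show ?case by (simp add: tp.intros)
next
  case (tp_add g h) then show ?case by (simp add: distrib_left tp.intros)
qed

lemma tp_sum: "finite I \<Longrightarrow> (\<And>i. i \<in> I \<Longrightarrow> tp (g i)) \<Longrightarrow> tp (\<lambda>x. \<Sum>i\<in>I. g i x)"
  by (induction I rule: finite_induct) (auto intro: tp.intros)

lemma tp_tanh: "tp (\<lambda>x. tanh (a * x + b))"
proof -
  have "tp (\<lambda>x. poly [:0,1:] (tanh (a * x + b)))" by (rule tp.intros)
  then show ?thesis by simp
qed

lemma Cb_infI:
  assumes "\<And>x. \<phi> differentiable (at x)" "bounded (range \<phi>)" "tp (deriv \<phi>)"
  shows "Cb_inf \<phi>"
  unfolding Cb_inf_def
proof
  fix k show "(\<forall>x. (deriv ^^ k) \<phi> differentiable at x) \<and> bounded (range ((deriv ^^ k) \<phi>))"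
  proof (cases k)
    case 0 then show ?thesis using assms by simp
  next
    case (Suc m)
    have "(deriv ^^ k) \<phi> = (deriv ^^ m) (deriv \<phi>)" using Suc by (simp only: funpow_Suc_right comp_def)
    moreover have "tp ((deriv ^^ m) (deriv \<phi>))" using assms(3) by (rule tp_funpow)
    ultimately have t: "tp ((deriv ^^ k) \<phi>)" by simp
    obtain B where "\<forall>x. \<bar>(deriv ^^ k) \<phi> x\<bar> \<le> B" using tp_bounded[OF t] by blast
    then have "bounded (range ((deriv ^^ k) \<phi>))" unfolding bounded_real by auto
    then show ?thesis using tp_differentiable[OF t] by blast
  qed
qed


definition lc :: "real \<Rightarrow> real \<Rightarrow> real" where
  "lc s y = ln (cosh (s * y)) / s"

lemma lc_deriv: "s \<noteq> 0 \<Longrightarrow> (lc s has_real_derivative tanh (s * y)) (at y)"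
proof -
  assume s: "s \<noteq> 0"
  have "((\<lambda>y. ln (cosh (s * y)) / s) has_real_derivative
     (1 / cosh (s * y) * (sinh (s * y) * (s * 1))) / s) (at y)"
    by (auto intro!: derivative_eq_intros)
  moreover have "(1 / cosh (s * y) * (sinh (s * y) * (s * 1))) / s = tanh (s * y)"
    using s by (simp add: tanh_def)
  ultimately show ?thesis unfolding lc_def[abs_def] by simp
qed

lemma lc_lip:
  assumes "s \<noteq> 0"
  shows "\<bar>lc s u - lc s v\<bar> \<le> \<bar>u - v\<bar>"
proof -
  have gen: "\<bar>lc s b - lc s a\<bar> \<le> b - a" if "a < b" for a b
  proof -
    have "\<exists>z. a < z \<and> z < b \<and> lc s b - lc s a = (b - a) * tanh (s * z)"
      by (rule MVT2[OF that]) (use lc_deriv[OF assms] in auto)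
    then obtain z where "lc s b - lc s a = (b - a) * tanh (s * z)" by blast
    moreover have "\<bar>tanh (s * z)\<bar> \<le> 1" using tanh_real_bounds[of "s*z"] by auto
    ultimately show ?thesis using that by (simp add: abs_mult mult_left_le)
  qed
  consider "u < v" | "u = v" | "v < u" by linarith
  then show ?thesis
    by cases (use gen[of u v] gen[of v u] in \<open>auto simp: abs_minus_commute\<close>)
qed

definition Phi :: "real \<Rightarrow> 'i set \<Rightarrow> ('i \<Rightarrow> real) \<Rightarrow> ('i \<Rightarrow> real) \<Rightarrow> real \<Rightarrow> real \<Rightarrow> real" where
  "Phi s I c e L x = (\<Sum>i\<in>I. lc s (x - c i) - lc s (x - e i)) / L"

definition dPhi :: "real \<Rightarrow> 'i set \<Rightarrow> ('i \<Rightarrow> real) \<Rightarrow> ('i \<Rightarrow> real) \<Rightarrow> real \<Rightarrow> real \<Rightarrow> real" where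
  "dPhi s I c e L x = (\<Sum>i\<in>I. tanh (s * (x - c i)) - tanh (s * (x - e i))) / L"

lemma Phi_deriv:
  assumes "s \<noteq> 0"
  shows "(Phi s I c e L has_real_derivative dPhi s I c e L x) (at x)"
proof -
  have "((\<lambda>x. (\<Sum>i\<in>I. lc s (x - c i) - lc s (x - e i))) has_real_derivative
        (\<Sum>i\<in>I. tanh (s * (x - c i)) * (1 - 0) - tanh (s * (x - e i)) * (1 - 0))) (at x)"
    by (intro DERIV_sum DERIV_diff DERIV_chain2[OF lc_deriv[OF assms]] derivative_intros)
  then have "((\<lambda>x. (\<Sum>i\<in>I. lc s (x - c i) - lc s (x - e i)) / L) has_real_derivative
        (\<Sum>i\<in>I. tanh (s * (x - c i)) * (1 - 0) - tanh (s * (x - e i)) * (1 - 0)) / L) (at x)"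
    by (rule DERIV_cdivide)
  then show ?thesis unfolding Phi_def[abs_def] dPhi_def by simp
qed

lemma deriv_Phi: "s \<noteq> 0 \<Longrightarrow> deriv (Phi s I c e L) = dPhi s I c e L"
  using Phi_deriv DERIV_imp_deriv by blast

lemma tp_dPhi: "finite I \<Longrightarrow> tp (dPhi s I c e L)"
proof -
  assume fin: "finite I"
  have eq: "dPhi s I c e L = (\<lambda>x. \<Sum>i\<in>I. (1/L) * tanh (s * x + (- s * c i)) + (-1/L) * tanh (s * x + (- s * e i)))"
  proof (rule ext)
    fix x
    have "\<And>i. s*(x - c i) = s*x + (-s*c i)" "\<And>i. s*(x - e i) = s*x + (-s*e i)" by (simp_all add: algebra_simps)
    then show "dPhi s I c e L x = (\<Sum>i\<in>I. (1/L) * tanh (s * x + (- s * c i)) + (-1/L) * tanh (s * x + (- s * e i)))"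
      by (simp add: dPhi_def sum_divide_distrib diff_divide_distrib)
  qed
  show ?thesis unfolding eq
    by (intro tp_sum fin tp.tp_add tp_scale tp_tanh)
qed

lemma Phi_bound:
  assumes "s \<noteq> 0" "\<forall>i\<in>I. c i \<le> e i" "L = (\<Sum>i\<in>I. e i - c i)" "L > 0"
  shows "\<bar>Phi s I c e L x\<bar> \<le> 1"
proof -
  have "\<bar>\<Sum>i\<in>I. lc s (x - c i) - lc s (x - e i)\<bar> \<le> (\<Sum>i\<in>I. \<bar>lc s (x - c i) - lc s (x - e i)\<bar>)"
    by (rule sum_abs)
  also have "\<dots> \<le> (\<Sum>i\<in>I. e i - c i)"
  proof (rule sum_mono)
    fix i assume "i \<in> I"
    have "\<bar>lc s (x - c i) - lc s (x - e i)\<bar> \<le> \<bar>(x - c i) - (x - e i)\<bar>" by (rule lc_lip[OF assms(1)])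
    then show "\<bar>lc s (x - c i) - lc s (x - e i)\<bar> \<le> e i - c i" using assms(2) \<open>i \<in> I\<close> by auto
  qed
  finally show ?thesis using assms(3,4) by (simp add: Phi_def abs_div)
qed

lemma Cb_inf_Phi:
  assumes "s \<noteq> 0" "finite I" "\<forall>i\<in>I. c i \<le> e i" "L = (\<Sum>i\<in>I. e i - c i)" "L > 0"
  shows "Cb_inf (Phi s I c e L)"
proof (rule Cb_infI)
  show "Phi s I c e L differentiable at x" for x
    using Phi_deriv[OF assms(1)] real_differentiable_def by blast
  show "bounded (range (Phi s I c e L))" unfolding bounded_real using Phi_bound[OF assms(1,3,4,5)] by auto
  show "tp (deriv (Phi s I c e L))" by (simp add: deriv_Phi[OF assms(1)] tp_dPhi[OF assms(2)])
qed

lemma dPhi_nonneg: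
  assumes "s > 0" "\<forall>i\<in>I. c i \<le> e i" "L > 0"
  shows "dPhi s I c e L x \<ge> 0"
  unfolding dPhi_def using assms
  by (intro divide_nonneg_pos sum_nonneg) (auto intro!: mult_left_mono simp: diff_ge_0_iff_ge)

lemma tanh_sum_le2:
  fixes s x :: real and c e :: "'i \<Rightarrow> real"
  assumes "s > 0" "finite I" "\<forall>i\<in>I. c i < e i" "disjoint_family_on (\<lambda>i. {c i<..e i}) I"
  shows "(\<Sum>i\<in>I. tanh (s * (x - c i)) - tanh (s * (x - e i))) \<le> 2"
proof (cases "I = {}")
  case True then show ?thesis by simp
next
  case False
  define G where "G t = tanh (s * (t - x))" for t
  have mono: "G a \<le> G b" if "a \<le> b" for a b using that assms(1) by (simp add: G_def mult_left_mono)
  have cont: "continuous_on UNIV G" unfolding G_def by (intro continuous_intros) auto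
  then have rc: "continuous (at_right a) G" for a
    by (meson UNIV_I continuous_on_eq_continuous_within continuous_within_subset top_greatest)
  let ?N = "interval_measure G"
  have eq: "tanh (s * (x - c i)) - tanh (s * (x - e i)) = G (e i) - G (c i)" for i
  proof -
    have "s * (x - c i) = - (s * (c i - x))" "s * (x - e i) = - (s * (e i - x))" by (simp_all add: algebra_simps)
    then show ?thesis by (simp add: G_def)
  qed
  have "ennreal (\<Sum>i\<in>I. tanh (s * (x - c i)) - tanh (s * (x - e i))) = (\<Sum>i\<in>I. ennreal (G (e i) - G (c i)))"
    unfolding eq using assms(3) mono by (subst sum_ennreal) (auto simp: diff_ge_0_iff_ge less_imp_le)
  also have "\<dots> = (\<Sum>i\<in>I. emeasure ?N {c i<..e i})"
    using assms(3) by (intro sum.cong refl emeasure_interval_measure_Ioc[symmetric]) (auto intro: mono rc less_imp_le)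
  also have "\<dots> = emeasure ?N (\<Union>i\<in>I. {c i<..e i})"
    using assms(2,4) by (intro sum_emeasure) auto
  also have "\<dots> \<le> emeasure ?N {Min (c ` I)<..Max (e ` I)}"
  proof (rule emeasure_mono)
    show "(\<Union>i\<in>I. {c i<..e i}) \<subseteq> {Min (c ` I)<..Max (e ` I)}"
    proof
      fix y assume "y \<in> (\<Union>i\<in>I. {c i<..e i})"
      then obtain i where "i \<in> I" "c i < y" "y \<le> e i" by auto
      moreover have "Min (c ` I) \<le> c i" "e i \<le> Max (e ` I)" using \<open>i \<in> I\<close> assms(2) by auto
      ultimately show "y \<in> {Min (c ` I)<..Max (e ` I)}" by auto
    qed
  qed auto
  also have "\<dots> = ennreal (G (Max (e ` I)) - G (Min (c ` I)))"
  proof (rule emeasure_interval_measure_Ioc)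
    obtain i where "i \<in> I" using False by auto
    then have "Min (c ` I) \<le> c i" "e i \<le> Max (e ` I)" using assms(2) by auto
    then show "Min (c ` I) \<le> Max (e ` I)" using assms(3) \<open>i\<in>I\<close> by force
  qed (auto intro: mono rc)
  also have "\<dots> \<le> ennreal 2"
  proof (rule ennreal_leI)
    show "G (Max (e ` I)) - G (Min (c ` I)) \<le> 2"
      using tanh_real_bounds[of "s * (Max (e ` I) - x)"] tanh_real_bounds[of "s * (Min (c ` I) - x)"]
      by (auto simp: G_def)
  qed
  finally show ?thesis
    by (subst (asm) ennreal_le_iff) auto
qed

lemma sup_norm_dPhi:
  assumes "s > 0" "finite I" "\<forall>i\<in>I. c i < e i" "disjoint_family_on (\<lambda>i. {c i<..e i}) I" "L > 0"
  shows "sup_norm (dPhi s I c e L) \<le> 2 / L" "0 \<le> sup_norm (dPhi s I c e L)"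
proof -
  have b: "\<bar>dPhi s I c e L x\<bar> \<le> 2 / L" for x
  proof -
    have "dPhi s I c e L x \<ge> 0" using dPhi_nonneg[of s I c e L x] assms by (auto simp: less_imp_le)
    moreover have "dPhi s I c e L x \<le> 2 / L"
      unfolding dPhi_def using tanh_sum_le2[OF assms(1-4), of x] assms(5) by (simp add: divide_right_mono)
    ultimately show ?thesis by simp
  qed
  show "sup_norm (dPhi s I c e L) \<le> 2 / L" unfolding sup_norm_def
    by (rule cSUP_least) (use b in auto)
  have "bdd_above (range (\<lambda>x. \<bar>dPhi s I c e L x\<bar>))" by (rule bdd_aboveI2[where M="2/L"]) (use b in auto)
  then show "0 \<le> sup_norm (dPhi s I c e L)" unfolding sup_norm_def
    by (rule cSUP_upper2[where x=0]) auto
qed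


lemma tanh_lim_pos: "t > 0 \<Longrightarrow> (\<lambda>n. tanh ((real n + 1) * t)) \<longlonglongrightarrow> 1"
proof -
  assume t: "t > 0"
  have "filterlim (\<lambda>n. t * (real n + 1)) at_top sequentially"
  proof (rule filterlim_tendsto_pos_mult_at_top[OF tendsto_const t])
    have "LIM n sequentially. 1 + real n :> at_top"
      by (rule filterlim_tendsto_add_at_top[OF tendsto_const filterlim_real_sequentially])
    then show "LIM n sequentially. real n + 1 :> at_top" by (simp add: add.commute)
  qed
  then have "filterlim (\<lambda>n. (real n + 1) * t) at_top sequentially" by (simp add: mult.commute)
  from filterlim_compose[OF tanh_real_at_top this] show ?thesis .
qed

lemma tanh_lim: "(\<lambda>n. tanh ((real n + 1) * t)) \<longlonglongrightarrow> sgn t"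
proof -
  consider "t > 0" | "t = 0" | "t < 0" by linarith
  then show ?thesis
  proof cases
    case 1 then show ?thesis using tanh_lim_pos by simp
  next
    case 2 then show ?thesis by simp
  next
    case 3
    have "(\<lambda>n. - tanh ((real n + 1) * (- t))) \<longlonglongrightarrow> - 1"
      using tanh_lim_pos[of "-t"] 3 by (intro tendsto_minus) auto
    moreover have "(\<lambda>n. - tanh ((real n + 1) * (- t))) = (\<lambda>n. tanh ((real n + 1) * t))"
      by (simp add: fun_eq_iff)
    ultimately show ?thesis using 3 by simp
  qed
qed

definition psi :: "'i set \<Rightarrow> ('i \<Rightarrow> real) \<Rightarrow> ('i \<Rightarrow> real) \<Rightarrow> real \<Rightarrow> real \<Rightarrow> real" where
  "psi I c e L y = (\<Sum>i\<in>I. sgn (y - c i) - sgn (y - e i)) / L"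

lemma dPhi_lim: "L > 0 \<Longrightarrow> (\<lambda>n. dPhi (real n + 1) I c e L y) \<longlonglongrightarrow> psi I c e L y"
  unfolding dPhi_def psi_def
  by (intro tendsto_divide tendsto_const tendsto_sum tendsto_diff tanh_lim) auto

lemma psi_ge:
  assumes "finite I" "\<forall>i\<in>I. c i < e i" "L > 0"
  shows "psi I c e L y \<ge> 2 / L * indicator (\<Union>i\<in>I. {c i<..<e i}) y"
proof (cases "y \<in> (\<Union>i\<in>I. {c i<..<e i})")
  case True
  then obtain j where j: "j \<in> I" "c j < y" "y < e j" by auto
  have nn: "\<forall>i\<in>I. 0 \<le> sgn (y - c i) - sgn (y - e i)" using assms(2) by (auto simp: sgn_if)
  have "2 = sgn (y - c j) - sgn (y - e j)" using j by simp
  also have "\<dots> \<le> (\<Sum>i\<in>I. sgn (y - c i) - sgn (y - e i))"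
    by (rule member_le_sum) (use j nn assms(1) in auto)
  finally show ?thesis using True assms(3) by (simp add: psi_def divide_right_mono)
next
  case False
  have "0 \<le> (\<Sum>i\<in>I. sgn (y - c i) - sgn (y - e i))"
    using assms(2) by (intro sum_nonneg) (auto simp: sgn_if)
  then show ?thesis using False assms(3) by (simp add: psi_def)
qed

lemma psi_bound:
  assumes "L > 0" shows "\<bar>psi I c e L y\<bar> \<le> 2 * card I / L"
proof -
  have "\<bar>\<Sum>i\<in>I. sgn (y - c i) - sgn (y - e i)\<bar> \<le> (\<Sum>i\<in>I. \<bar>sgn (y - c i) - sgn (y - e i)\<bar>)" by (rule sum_abs)
  also have "\<dots> \<le> (\<Sum>i\<in>I. 2)" by (intro sum_mono) (auto simp: sgn_if)
  finally have "\<bar>\<Sum>i\<in>I. sgn (y - c i) - sgn (y - e i)\<bar> \<le> 2 * card I" by simp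
  then have "\<bar>\<Sum>i\<in>I. sgn (y - c i) - sgn (y - e i)\<bar> / L \<le> 2 * card I / L"
    using assms by (intro divide_right_mono) auto
  moreover have "\<bar>psi I c e L y\<bar> = \<bar>\<Sum>i\<in>I. sgn (y - c i) - sgn (y - e i)\<bar> / L"
    by (simp only: psi_def abs_div_pos[OF assms])
  ultimately show ?thesis by simp
qed

lemma dPhi_bound:
  assumes "L > 0" shows "\<bar>dPhi s I c e L y\<bar> \<le> 2 * card I / L"
proof -
  have "\<bar>\<Sum>i\<in>I. tanh (s * (y - c i)) - tanh (s * (y - e i))\<bar> \<le> (\<Sum>i\<in>I. \<bar>tanh (s * (y - c i)) - tanh (s * (y - e i))\<bar>)" by (rule sum_abs)
  also have "\<dots> \<le> (\<Sum>i\<in>I. 2)"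
  proof (intro sum_mono)
    fix i
    show "\<bar>tanh (s * (y - c i)) - tanh (s * (y - e i))\<bar> \<le> 2"
      using tanh_real_bounds[of "s * (y - c i)"] tanh_real_bounds[of "s * (y - e i)"] by auto
  qed
  finally have "\<bar>\<Sum>i\<in>I. tanh (s * (y - c i)) - tanh (s * (y - e i))\<bar> \<le> 2 * card I" by simp
  then have "\<bar>\<Sum>i\<in>I. tanh (s * (y - c i)) - tanh (s * (y - e i))\<bar> / L \<le> 2 * card I / L"
    using assms by (intro divide_right_mono) auto
  moreover have "\<bar>dPhi s I c e L y\<bar> = \<bar>\<Sum>i\<in>I. tanh (s * (y - c i)) - tanh (s * (y - e i))\<bar> / L"
    by (simp only: dPhi_def abs_div_pos[OF assms])
  ultimately show ?thesis by simp
qed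

lemma dPhi_meas: "dPhi s I c e L \<in> borel_measurable borel"
  unfolding dPhi_def by (intro borel_measurable_divide borel_measurable_const borel_measurable_continuous_onI continuous_intros) auto

lemma psi_meas: "L > 0 \<Longrightarrow> psi I c e L \<in> borel_measurable borel"
  by (rule borel_measurable_LIMSEQ_real[OF dPhi_lim dPhi_meas])

lemma partB:
  fixes M :: "'a measure" and f :: "'a \<Rightarrow> real" and I :: "'i set"
  assumes M: "prob_space M" and fm: "f \<in> borel_measurable M"
    and S: "S \<ge> 0" and r: "r \<ge> 0"
    and H: "\<And>\<phi>. Cb_inf \<phi> \<Longrightarrow> (\<forall>x. \<bar>\<phi> x\<bar> \<le> 1) \<Longrightarrow>
               S * (\<integral>x. deriv \<phi> (f x) \<partial>M) \<le> C * sup_norm (deriv \<phi>) powr r"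
    and fin: "finite I" and ne: "I \<noteq> {}" and ce: "\<forall>i\<in>I. c i < e i"
    and disj: "disjoint_family_on (\<lambda>i. {c i<..e i}) I"
    and L: "L = (\<Sum>i\<in>I. e i - c i)"
  shows "S * (2 / L * measure M {x\<in>space M. f x \<in> (\<Union>i\<in>I. {c i<..<e i})}) \<le> max C 0 * (2 / L) powr r"
proof -
  interpret prob_space M by (rule M)
  have Lpos: "L > 0" unfolding L using fin ne ce by (intro sum_pos) auto
  have ce': "\<forall>i\<in>I. c i \<le> e i" using ce by (auto simp: less_imp_le)
  define s where "s n = real n + 1" for n :: nat
  have spos: "s n > 0" for n by (simp add: s_def)
  define B where "B = max C 0 * (2 / L) powr r"
  have step: "S * (\<integral>x. dPhi (s n) I c e L (f x) \<partial>M) \<le> B" for n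
  proof -
    have s0: "s n \<noteq> 0" using spos[of n] by simp
    have "S * (\<integral>x. deriv (Phi (s n) I c e L) (f x) \<partial>M) \<le> C * sup_norm (deriv (Phi (s n) I c e L)) powr r"
      by (rule H) (use Cb_inf_Phi[OF s0 fin ce' L Lpos] Phi_bound[OF s0 ce' L Lpos] in auto)
    also have "\<dots> \<le> max C 0 * sup_norm (deriv (Phi (s n) I c e L)) powr r"
      by (rule mult_right_mono) auto
    also have "\<dots> \<le> B" unfolding B_def deriv_Phi[OF s0]
      by (intro mult_left_mono powr_mono2 r sup_norm_dPhi[OF spos fin ce disj Lpos]) auto
    finally show ?thesis unfolding deriv_Phi[OF s0] .
  qed
  have lim: "(\<lambda>n. \<integral>x. dPhi (s n) I c e L (f x) \<partial>M) \<longlonglongrightarrow> (\<integral>x. psi I c e L (f x) \<partial>M)"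
  proof (rule integral_dominated_convergence[where w="\<lambda>x. 2 * card I / L"])
    show "(\<lambda>x. psi I c e L (f x)) \<in> borel_measurable M"
      by (rule measurable_compose[OF fm psi_meas[OF Lpos]])
    show "(\<lambda>x. dPhi (s n) I c e L (f x)) \<in> borel_measurable M" for n
      by (rule measurable_compose[OF fm dPhi_meas])
    show "AE x in M. (\<lambda>n. dPhi (s n) I c e L (f x)) \<longlonglongrightarrow> psi I c e L (f x)"
      unfolding s_def using Lpos by (intro AE_I2 dPhi_lim)
    show "AE x in M. norm (dPhi (s n) I c e L (f x)) \<le> 2 * card I / L" for n
      by (intro AE_I2) (simp only: real_norm_def dPhi_bound[OF Lpos])
  qed (rule integrable_const)
  have lim2: "S * (\<integral>x. psi I c e L (f x) \<partial>M) \<le> B"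
    by (rule LIMSEQ_le_const2[OF tendsto_mult[OF tendsto_const lim]]) (use step in blast)
  define U where "U = (\<Union>i\<in>I. {c i<..<e i})"
  have Ub: "U \<in> sets borel" unfolding U_def using fin by auto
  have int_psi: "integrable M (\<lambda>x. psi I c e L (f x))"
    using measurable_compose[OF fm psi_meas[OF Lpos]] psi_bound[OF Lpos]
    by (intro integrable_const_bound[where B="2 * card I / L"] AE_I2) auto
  have "(\<integral>x. 2 / L * indicator U (f x) \<partial>M) \<le> (\<integral>x. psi I c e L (f x) \<partial>M)"
  proof (rule integral_mono[OF _ int_psi])
    show "integrable M (\<lambda>x. 2 / L * indicator U (f x))"
      using Ub fm by (intro integrable_mult_right integrable_const_bound[where B=1]) (auto simp: indicator_def)
    show "2 / L * indicator U (f x) \<le> psi I c e L (f x)" for x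
      using psi_ge[OF fin ce Lpos] unfolding U_def by simp
  qed
  moreover have "(\<integral>x. 2 / L * indicator U (f x) \<partial>M) = 2 / L * measure M {x\<in>space M. f x \<in> U}"
  proof -
    have "(\<integral>x. indicator U (f x) \<partial>M) = (\<integral>x. indicator {x\<in>space M. f x \<in> U} x \<partial>M)"
      by (intro Bochner_Integration.integral_cong) (auto simp: indicator_def)
    also have "\<dots> = measure M {x\<in>space M. f x \<in> U}"
      using Bochner_Integration.integral_indicator[of M "{x\<in>space M. f x \<in> U}"] by (simp add: Int_absorb2 subset_eq)
    finally show ?thesis by simp
  qed
  ultimately have "2 / L * measure M {x\<in>space M. f x \<in> U} \<le> (\<integral>x. psi I c e L (f x) \<partial>M)" using Lpos by simp
  then have "S * (2 / L * measure M {x\<in>space M. f x \<in> U}) \<le> S * (\<integral>x. psi I c e L (f x) \<partial>M)"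
    using S by (rule mult_left_mono)
  from this lim2 have "S * (2 / L * measure M {x\<in>space M. f x \<in> U}) \<le> B" by (rule order_trans)
  then show ?thesis by (simp only: B_def U_def)
qed


locale pc =
  fixes N :: "real measure" and \<rho> :: "real \<Rightarrow> real" and A :: real and d :: nat
  assumes N_eq: "N = density lborel (\<lambda>x. ennreal (\<rho> x))"
    and \<rho>_meas: "\<rho> \<in> borel_measurable borel" and \<rho>_nonneg: "\<And>x. \<rho> x \<ge> 0"
    and N_prob: "prob_space N"
    and A_nonneg: "A \<ge> 0" and d_pos: "d \<ge> 1"
    and hypF: "\<And>F. finite F \<Longrightarrow> F \<noteq> {} \<Longrightarrow> (\<forall>K\<in>F. Inf K < Sup K) \<Longrightarrow>
       pairwise (\<lambda>K K'. {Inf K<..<Sup K} \<inter> {Inf K'<..<Sup K'} = {}) F \<Longrightarrow>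
       measure N (\<Union>K\<in>F. {Inf K<..<Sup K}) \<le> A * (\<Sum>K\<in>F. Sup K - Inf K) powr (1 / real d)"
begin

lemma sets_N[simp, measurable_cong]: "sets N = sets borel"
  by (simp add: N_eq)

lemma space_N[simp]: "space N = UNIV"
  by (simp add: N_eq)

lemma null_N: "X \<in> null_sets lborel \<Longrightarrow> X \<in> null_sets N"
  unfolding N_eq using \<rho>_meas
  by (subst null_sets_density_iff) (auto dest: AE_not_in)

lemma fin_N: "finite_measure N"
  using N_prob by (simp add: prob_space_def)

lemma C1:
  assumes D: "countable D" and int: "\<forall>K\<in>D. \<exists>a b. a < b \<and> K = {a..b}"
    and disj: "pairwise (\<lambda>K K'. interior K \<inter> interior K' = {}) D"
    and fin: "emeasure lborel (\<Union>D) < \<infinity>"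
  shows "measure N (\<Union>D) \<le> A * measure lborel (\<Union>D) powr (1 / real d)"
proof (cases "D = {}")
  case True then show ?thesis by simp
next
  case False
  interpret N: finite_measure N by (rule fin_N)
  have intK: "interior K = {Inf K<..<Sup K}" "K = {Inf K..Sup K}" "Inf K < Sup K" if "K \<in> D" for K
    using int that by auto
  define g where "g = from_nat_into D"
  have rg: "range g = D" unfolding g_def using False D by simp
  define V where "V n = (\<Union>K\<in>g ` {..<n}. {Inf K<..<Sup K})" for n
  have Vinc: "incseq V" unfolding V_def incseq_def by (intro allI impI UN_mono image_mono) auto
  have Vun: "(\<Union>n. V n) = (\<Union>K\<in>D. {Inf K<..<Sup K})"
    unfolding V_def rg[symmetric] by auto
  have pw: "pairwise (\<lambda>K K'. {Inf K<..<Sup K} \<inter> {Inf K'<..<Sup K'} = {}) D"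
    using disj intK(1) unfolding pairwise_def by metis
  have ubd: "measure N (V n) \<le> A * measure lborel (\<Union>D) powr (1 / real d)" for n
  proof (cases "n = 0")
    case True then show ?thesis using A_nonneg by (simp add: V_def)
  next
    case False
    define F where "F = g ` {..<n}"
    have FD: "F \<subseteq> D" unfolding F_def using rg by auto
    have Fne: "F \<noteq> {}" "finite F" using False by (auto simp: F_def)
    have pwF: "pairwise (\<lambda>K K'. {Inf K<..<Sup K} \<inter> {Inf K'<..<Sup K'} = {}) F"
      using pw FD pairwise_subset by blast
    have "measure N (V n) \<le> A * (\<Sum>K\<in>F. Sup K - Inf K) powr (1 / real d)"
      unfolding V_def F_def[symmetric] using Fne FD intK(3) pwF by (intro hypF) auto
    also have "(\<Sum>K\<in>F. Sup K - Inf K) \<le> measure lborel (\<Union>D)"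
    proof -
      have "ennreal (\<Sum>K\<in>F. Sup K - Inf K) = (\<Sum>K\<in>F. ennreal (Sup K - Inf K))"
        using FD intK(3) by (subst sum_ennreal) (auto simp: less_imp_le)
      also have "\<dots> = (\<Sum>K\<in>F. emeasure lborel {Inf K<..<Sup K})"
        using FD intK(3) by (intro sum.cong refl) (auto simp: subset_iff intro!: emeasure_lborel_Ioo[symmetric] less_imp_le)
      also have "\<dots> = emeasure lborel (\<Union>K\<in>F. {Inf K<..<Sup K})"
        using Fne pwF by (intro sum_emeasure) (auto simp: disjoint_family_on_def pairwise_def)
      also have "\<dots> \<le> emeasure lborel (\<Union>D)"
      proof (rule emeasure_mono)
        show "(\<Union>K\<in>F. {Inf K<..<Sup K}) \<subseteq> \<Union>D"
          using FD intK(2) by fastforce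
        have "\<forall>K\<in>D. K \<in> sets borel" using int by auto
        then show "\<Union>D \<in> sets lborel" using D by (intro sets.countable_Union) auto
      qed
      also have "\<dots> = ennreal (measure lborel (\<Union>D))"
        using fin by (simp add: emeasure_eq_ennreal_measure)
      finally show ?thesis by (subst (asm) ennreal_le_iff) auto
    qed
    then have "A * (\<Sum>K\<in>F. Sup K - Inf K) powr (1 / real d) \<le> A * measure lborel (\<Union>D) powr (1 / real d)"
      using A_nonneg FD intK(3)
      by (intro mult_left_mono powr_mono2) (auto intro!: sum_nonneg simp: less_imp_le)
    finally show ?thesis .
  qed
  have "(\<lambda>n. measure N (V n)) \<longlonglongrightarrow> measure N (\<Union>n. V n)"
  proof (rule N.finite_Lim_measure_incseq)
    show "range V \<subseteq> sets N" by (auto simp: V_def)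
  qed (rule Vinc)
  then have le1: "measure N (\<Union>K\<in>D. {Inf K<..<Sup K}) \<le> A * measure lborel (\<Union>D) powr (1 / real d)"
    unfolding Vun by (rule LIMSEQ_le_const2) (use ubd in blast)
  define E where "E = Inf ` D \<union> Sup ` D"
  have Enull: "E \<in> null_sets N" unfolding E_def using D
    by (intro null_N countable_imp_null_set_lborel) auto
  have sub: "\<Union>D \<subseteq> (\<Union>K\<in>D. {Inf K<..<Sup K}) \<union> E"
  proof
    fix x assume "x \<in> \<Union>D"
    then obtain K where K: "K \<in> D" "x \<in> K" by auto
    then have "Inf K \<le> x" "x \<le> Sup K" using intK(2)[OF K(1)] by auto
    show "x \<in> (\<Union>K\<in>D. {Inf K<..<Sup K}) \<union> E"
    proof (cases "x = Inf K \<or> x = Sup K")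
      case True then show ?thesis using K unfolding E_def by auto
    next
      case False
      then have "x \<in> {Inf K<..<Sup K}" using \<open>Inf K \<le> x\<close> \<open>x \<le> Sup K\<close> by auto
      then show ?thesis using K by blast
    qed
  qed
  have Ob: "(\<Union>K\<in>D. {Inf K<..<Sup K}) \<in> sets borel" by (intro borel_open open_UN) auto
  have Eb: "E \<in> sets borel" using null_setsD2[OF Enull] by simp
  have "measure N (\<Union>D) \<le> measure N ((\<Union>K\<in>D. {Inf K<..<Sup K}) \<union> E)"
    using sub Ob Eb by (intro N.finite_measure_mono) auto
  also have "\<dots> \<le> measure N (\<Union>K\<in>D. {Inf K<..<Sup K}) + measure N E"
    using Ob Eb by (intro measure_Un_le) auto
  also have "measure N E = 0" by (simp add: measure_def null_setsD1[OF Enull])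
  finally show ?thesis using le1 by simp
qed

lemma C2:
  assumes S: "S \<in> sets borel" and Sab: "S \<subseteq> {a..b}" and ab: "a < b"
  shows "measure N S \<le> A * measure lborel S powr (1 / real d)"
proof -
  interpret N: finite_measure N by (rule fin_N)
  have key: "measure N S \<le> A * (measure lborel S + e) powr (1 / real d)" if e: "e > 0" for e
  proof -
    have Sl: "S \<in> lmeasurable"
      by (rule fmeasurableI2[OF lmeasurable_cbox[of a b]]) (use S Sab in auto)
    have Sc: "S \<subseteq> cbox a b" using Sab by simp
    obtain D where D: "countable D"
        "\<And>K. K \<in> D \<Longrightarrow> K \<subseteq> cbox a b \<and> K \<noteq> {} \<and> (\<exists>c d. K = cbox c d)"
        "pairwise (\<lambda>A B. interior A \<inter> interior B = {}) D"
        "\<And>u v. cbox u v \<in> D \<Longrightarrow> \<exists>n. \<forall>i \<in> Basis. v \<bullet> i - u \<bullet> i = (b \<bullet> i - a \<bullet> i)/2^n"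
        "\<And>K. \<lbrakk>K \<in> D; box a b \<noteq> {}\<rbrakk> \<Longrightarrow> interior K \<noteq> {}"
        "S \<subseteq> \<Union>D" "\<Union>D \<in> lmeasurable" "measure lebesgue (\<Union>D) \<le> measure lebesgue S + e"
      by (rule measurable_outer_intervals_bounded[OF Sl Sc e], rule that) assumption+
    have int: "\<forall>K\<in>D. \<exists>c d. c < d \<and> K = {c..d}"
    proof
      fix K assume K: "K \<in> D"
      then obtain c d where cd: "K = cbox c d" using D(2) by blast
      have "interior K \<noteq> {}" using D(5)[OF K] ab by simp
      then have "c < d" using cd by auto
      then show "\<exists>c d. c < d \<and> K = {c..d}" using cd by auto
    qed
    have UDsub: "\<Union>D \<subseteq> {a..b}" using D(2) by auto
    have UDb: "\<Union>D \<in> sets borel"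
    proof -
      have "\<forall>K\<in>D. K \<in> sets borel" using int by auto
      then show ?thesis using D(1) by (intro sets.countable_Union) auto
    qed
    have fin: "emeasure lborel (\<Union>D) < \<infinity>"
    proof -
      have "emeasure lborel (\<Union>D) \<le> emeasure lborel {a..b}" using UDsub by (intro emeasure_mono) auto
      also have "\<dots> < \<infinity>" using ab by simp
      finally show ?thesis .
    qed
    have "measure N S \<le> measure N (\<Union>D)" using D(6) UDb by (intro N.finite_measure_mono) auto
    also have "\<dots> \<le> A * measure lborel (\<Union>D) powr (1 / real d)"
      by (rule C1[OF D(1) int D(3) fin])
    also have "\<dots> \<le> A * (measure lborel S + e) powr (1 / real d)"
    proof -
      have "measure lborel (\<Union>D) \<le> measure lborel S + e"
        using D(8) UDb S by simp
      then show ?thesis using A_nonneg by (intro mult_left_mono powr_mono2) auto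
    qed
    finally show ?thesis .
  qed
  have z: "(\<lambda>n. 1 / (real n + 1)) \<longlonglongrightarrow> 0"
    using LIMSEQ_inverse_real_of_nat by (simp add: inverse_eq_divide add.commute)
  have lim: "(\<lambda>n. A * (measure lborel S + 1 / (real n + 1)) powr (1 / real d)) \<longlonglongrightarrow> A * (measure lborel S + 0) powr (1 / real d)"
    by (intro tendsto_mult tendsto_const tendsto_powr' tendsto_add z disjI2 conjI always_eventually allI)
       (use d_pos in auto)
  show ?thesis
  proof (rule LIMSEQ_le_const[OF lim[simplified]])
    show "\<exists>n0. \<forall>n\<ge>n0. measure N S \<le> A * (measure lborel S + 1 / (real n + 1)) powr (1 / real d)"
      by (intro exI[of _ 0] allI impI key) auto
  qed
qed

lemma C3:
  assumes S: "S \<in> sets borel" and fin: "emeasure lborel S < \<infinity>"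
  shows "measure N S \<le> A * measure lborel S powr (1 / real d)"
proof -
  interpret N: finite_measure N by (rule fin_N)
  define T where "T n = S \<inter> {- (real n + 1)..real n + 1}" for n :: nat
  have Tinc: "incseq T" unfolding T_def incseq_def by auto
  have Tun: "(\<Union>n. T n) = S"
  proof
    show "(\<Union>n. T n) \<subseteq> S" by (auto simp: T_def)
    show "S \<subseteq> (\<Union>n. T n)"
    proof
      fix x assume x: "x \<in> S"
      obtain n :: nat where "\<bar>x\<bar> \<le> real n" using real_arch_simple by blast
      then have "x \<in> T n" using x by (auto simp: T_def)
      then show "x \<in> (\<Union>n. T n)" by blast
    qed
  qed
  have Tb: "T n \<in> sets borel" for n using S by (auto simp: T_def)
  have bd: "measure N (T n) \<le> A * measure lborel S powr (1 / real d)" for n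
  proof -
    have "measure N (T n) \<le> A * measure lborel (T n) powr (1 / real d)"
      by (rule C2[OF Tb, where a="- (real n + 1)" and b="real n + 1"]) (auto simp: T_def)
    also have "\<dots> \<le> A * measure lborel S powr (1 / real d)"
      using A_nonneg fin S by (intro mult_left_mono powr_mono2 measure_mono_fmeasurable)
         (auto simp: T_def fmeasurable_def)
    finally show ?thesis .
  qed
  have "(\<lambda>n. measure N (T n)) \<longlonglongrightarrow> measure N (\<Union>n. T n)"
    using Tinc Tb by (intro N.finite_Lim_measure_incseq) auto
  then show ?thesis unfolding Tun by (rule LIMSEQ_le_const2) (use bd in blast)
qed

end


lemma layer_cake:
  fixes g :: "real \<Rightarrow> real" and p :: real
  assumes g[measurable]: "g \<in> borel_measurable borel" and gnn: "\<And>y. g y \<ge> 0" and p: "p > 1"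
  shows "(\<integral>\<^sup>+y. ennreal (g y powr p) \<partial>lborel) =
         (\<integral>\<^sup>+t. ennreal (p * t powr (p - 1)) * emeasure lborel {y. 0 \<le> t \<and> t \<le> g y} \<partial>lborel)"
proof -
  define F where "F y t = (if 0 \<le> t \<and> t \<le> g y then ennreal (p * t powr (p - 1)) else 0)" for y t
  have inner: "ennreal (g y powr p) = (\<integral>\<^sup>+t. F y t \<partial>lborel)" for y
  proof -
    have "((\<lambda>t. t powr (p - 1)) has_integral (g y) powr (p - 1 + 1) / (p - 1 + 1)) {0..g y}"
      using p gnn by (intro has_integral_powr_from_0) auto
    then have "((\<lambda>t. p * t powr (p - 1)) has_integral p * ((g y) powr (p - 1 + 1) / (p - 1 + 1))) {0..g y}"
      by (rule has_integral_mult_right)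
    moreover have "p * ((g y) powr (p - 1 + 1) / (p - 1 + 1)) = g y powr p" using p by simp
    ultimately have hi: "((\<lambda>t. p * t powr (p - 1)) has_integral g y powr p) {0..g y}" by simp
    have "(\<integral>\<^sup>+t. ennreal (p * t powr (p - 1)) * indicator {0..g y} t \<partial>lborel) = ennreal (g y powr p)"
      by (rule nn_integral_has_integral_lebesgue'[OF _ hi]) (use p in auto)
    moreover have "(\<lambda>t. ennreal (p * t powr (p - 1)) * indicator {0..g y} t) = F y"
      by (auto simp: F_def indicator_def fun_eq_iff)
    ultimately show ?thesis by simp
  qed
  have meas: "case_prod F \<in> borel_measurable (lborel \<Otimes>\<^sub>M lborel)"
    unfolding F_def[abs_def] by measurable
  have "(\<integral>\<^sup>+y. ennreal (g y powr p) \<partial>lborel) = (\<integral>\<^sup>+y. (\<integral>\<^sup>+t. F y t \<partial>lborel) \<partial>lborel)"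
    by (simp add: inner)
  also have "\<dots> = (\<integral>\<^sup>+t. (\<integral>\<^sup>+y. F y t \<partial>lborel) \<partial>lborel)"
    by (rule lborel_pair.Fubini'[OF meas, symmetric])
  also have "\<dots> = (\<integral>\<^sup>+t. ennreal (p * t powr (p - 1)) * emeasure lborel {y. 0 \<le> t \<and> t \<le> g y} \<partial>lborel)"
  proof (rule nn_integral_cong)
    fix t
    have "(\<lambda>y. F y t) = (\<lambda>y. ennreal (p * t powr (p - 1)) * indicator {y. 0 \<le> t \<and> t \<le> g y} y)"
      by (auto simp: F_def indicator_def fun_eq_iff)
    moreover have "{y. 0 \<le> t \<and> t \<le> g y} \<in> sets lborel" by measurable
    ultimately show "(\<integral>\<^sup>+y. F y t \<partial>lborel) = ennreal (p * t powr (p - 1)) * emeasure lborel {y. 0 \<le> t \<and> t \<le> g y}"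
      by (simp add: nn_integral_cmult_indicator)
  qed
  finally show ?thesis .
qed


context pc
begin

lemma level_set_borel[measurable]: "{y. t \<le> \<rho> y} \<in> sets borel"
  using \<rho>_meas by measurable

lemma level_bound:
  assumes t: "t > 0"
  shows "emeasure lborel {y. t \<le> \<rho> y} < \<infinity>"
    and "t * measure lborel {y. t \<le> \<rho> y} \<le> A * measure lborel {y. t \<le> \<rho> y} powr (1 / real d)"
proof -
  define X where "X = {y. t \<le> \<rho> y}"
  have Xb: "X \<in> sets borel" unfolding X_def by (rule level_set_borel)
  interpret NP: prob_space N by (rule N_prob)
  have "ennreal t * emeasure lborel X = (\<integral>\<^sup>+y. ennreal t * indicator X y \<partial>lborel)"
    using Xb by (simp add: nn_integral_cmult_indicator)
  also have "\<dots> \<le> (\<integral>\<^sup>+y. ennreal (\<rho> y) * indicator X y \<partial>lborel)"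
    by (intro nn_integral_mono) (simp add: X_def indicator_def ennreal_leI)
  also have "\<dots> = emeasure N X"
    unfolding N_eq using Xb \<rho>_meas by (subst emeasure_density) auto
  finally have le: "ennreal t * emeasure lborel X \<le> emeasure N X" .
  also have "\<dots> \<le> 1" by (rule NP.emeasure_le_1)
  finally have le1: "ennreal t * emeasure lborel X \<le> 1" .
  show fin: "emeasure lborel {y. t \<le> \<rho> y} < \<infinity>"
  proof (rule ccontr)
    assume "\<not> emeasure lborel {y. t \<le> \<rho> y} < \<infinity>"
    then have "emeasure lborel X = \<infinity>" unfolding X_def by (simp add: less_top[symmetric])
    then have "ennreal t * emeasure lborel X = \<infinity>" using t by (simp add: ennreal_mult_top)
    with le1 show False by (simp add: top_unique)
  qed
  have "ennreal (t * measure lborel X) = ennreal t * emeasure lborel X"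
    using fin t unfolding X_def by (simp add: emeasure_eq_ennreal_measure ennreal_mult)
  also note le
  also have "emeasure N X = ennreal (measure N X)" by (simp add: NP.emeasure_eq_measure)
  finally have "t * measure lborel X \<le> measure N X" by (subst (asm) ennreal_le_iff) auto
  also have "\<dots> \<le> A * measure lborel X powr (1 / real d)"
    by (rule C3[OF Xb]) (use fin in \<open>simp add: X_def\<close>)
  finally show "t * measure lborel {y. t \<le> \<rho> y} \<le> A * measure lborel {y. t \<le> \<rho> y} powr (1 / real d)"
    unfolding X_def .
qed

lemma level_le_inv:
  assumes t: "t > 0"
  shows "measure lborel {y. t \<le> \<rho> y} \<le> 1 / t"
proof -
  define X where "X = {y. t \<le> \<rho> y}"
  have Xb: "X \<in> sets borel" unfolding X_def by (rule level_set_borel)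
  interpret NP: prob_space N by (rule N_prob)
  have "ennreal t * emeasure lborel X = (\<integral>\<^sup>+y. ennreal t * indicator X y \<partial>lborel)"
    using Xb by (simp add: nn_integral_cmult_indicator)
  also have "\<dots> \<le> (\<integral>\<^sup>+y. ennreal (\<rho> y) * indicator X y \<partial>lborel)"
    by (intro nn_integral_mono) (simp add: X_def indicator_def ennreal_leI)
  also have "\<dots> = emeasure N X"
    unfolding N_eq using Xb \<rho>_meas by (subst emeasure_density) auto
  also have "\<dots> \<le> 1" by (rule NP.emeasure_le_1)
  finally have le1: "ennreal t * emeasure lborel X \<le> 1" .
  have fin: "emeasure lborel X < \<infinity>" using level_bound(1)[OF t] by (simp add: X_def)
  have "ennreal (t * measure lborel X) = ennreal t * emeasure lborel X"
    using fin t by (simp add: emeasure_eq_ennreal_measure ennreal_mult)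
  with le1 have "t * measure lborel X \<le> 1" by (metis ennreal_le_1)
  then show ?thesis using t unfolding X_def by (simp add: field_simps)
qed

lemma level_bound_d:
  assumes d1: "d > 1" and t: "t > 0"
  shows "measure lborel {y. t \<le> \<rho> y} \<le> (A / t) powr (real d / (real d - 1))"
proof -
  define m where "m = measure lborel {y. t \<le> \<rho> y}"
  have m0: "m \<ge> 0" by (simp add: m_def)
  have key: "t * m \<le> A * m powr (1 / real d)" using level_bound(2)[OF t] by (simp add: m_def)
  show ?thesis
  proof (cases "m = 0")
    case True then show ?thesis by (simp add: m_def[symmetric])
  next
    case False
    then have mpos: "m > 0" using m0 by simp
    have dr: "real d > 1" using d1 by simp
    have split: "m = m powr (1 / real d) * m powr (1 - 1 / real d)"
      using mpos by (simp add: powr_add[symmetric])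
    have "t * (m powr (1 / real d) * m powr (1 - 1 / real d)) \<le> A * m powr (1 / real d)"
      using key split by simp
    then have "m powr (1 / real d) * (t * m powr (1 - 1 / real d)) \<le> m powr (1 / real d) * A"
      by (simp add: algebra_simps)
    then have "t * m powr (1 - 1 / real d) \<le> A"
      using mpos by (subst (asm) mult_le_cancel_left_pos) auto
    then have b: "m powr (1 - 1 / real d) \<le> A / t" using t by (simp add: field_simps)
    have "m = (m powr (1 - 1 / real d)) powr (real d / (real d - 1))"
      using dr mpos by (simp add: powr_powr field_simps)
    also have "\<dots> \<le> (A / t) powr (real d / (real d - 1))"
      using b dr by (intro powr_mono2) auto
    finally show ?thesis by (simp add: m_def)
  qed
qed

lemma level_bound_1:
  assumes d1: "d = 1" and t: "t > A"
  shows "measure lborel {y. t \<le> \<rho> y} = 0"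
proof -
  define m where "m = measure lborel {y. t \<le> \<rho> y}"
  have m0: "m \<ge> 0" by (simp add: m_def)
  have tpos: "t > 0" using t A_nonneg by simp
  have "t * m \<le> A * m" using level_bound(2)[OF tpos] d1 m0 by (simp add: m_def powr_one)
  then have "(t - A) * m \<le> 0" by (simp add: algebra_simps)
  then have "m \<le> 0" using t by (simp add: mult_le_0_iff)
  then have "m = 0" using m0 by linarith
  then show ?thesis by (simp add: m_def)
qed

lemma A_pos: "A > 0"
proof (rule ccontr)
  assume "\<not> A > 0"
  then have A0: "A = 0" using A_nonneg by simp
  interpret NP: prob_space N by (rule N_prob)
  define T where "T n = {- real n..real n}" for n :: nat
  have "measure N (T n) \<le> A * measure lborel (T n) powr (1 / real d)" for n
    by (rule C3) (auto simp: T_def)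
  then have z: "measure N (T n) = 0" for n using A0 by (simp add: measure_nonneg antisym)
  have "(\<lambda>n. measure N (T n)) \<longlonglongrightarrow> measure N (\<Union>n. T n)"
    by (intro NP.finite_Lim_measure_incseq) (auto simp: T_def incseq_def)
  moreover have "(\<Union>n. T n) = UNIV"
  proof -
    have "x \<in> (\<Union>n. T n)" for x
    proof -
      obtain n :: nat where "\<bar>x\<bar> \<le> real n" using real_arch_simple by blast
      then show ?thesis by (auto simp: T_def intro!: exI[of _ n])
    qed
    then show ?thesis by auto
  qed
  ultimately have "measure N UNIV = 0" using z by (simp add: LIMSEQ_const_iff)
  then show False using NP.prob_space by simp
qed

end


context pc
begin

lemma Lp_bound:
  assumes p: "p > 1" and pq: "d = 1 \<or> p < real d / (real d - 1)"
  shows "(\<integral>\<^sup>+y. ennreal (\<rho> y powr p) \<partial>lborel)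
     \<le> ennreal ((p / (p - 1) + (if d = 1 then 0 else p / (real d / (real d - 1) - p))) * A powr (real d * (p - 1)))"
proof -
  have Apos: "A > 0" by (rule A_pos)
  define q where "q = real d / (real d - 1)"
  define t0 where "t0 = A powr real d"
  have t0pos: "t0 > 0" using Apos by (simp add: t0_def)
  define h1 where "h1 t = p * t powr (p - 2)" for t
  define h2 where "h2 t = (if d = 1 then 0 else p * A powr q * t powr (p - 1 - q))" for t
  have h1nn: "h1 t \<ge> 0" for t using p by (simp add: h1_def)
  have h2nn: "h2 t \<ge> 0" for t using p Apos by (simp add: h2_def)
  have pw: "ennreal (p * t powr (p - 1)) * emeasure lborel {y. 0 \<le> t \<and> t \<le> \<rho> y}
      \<le> ennreal (h1 t) * indicator {0..t0} t + ennreal (h2 t) * indicator {t0..} t" for t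
  proof -
    consider "t < 0" | "t = 0" | "0 < t \<and> t \<le> t0" | "t > t0" using t0pos by linarith
    then show ?thesis
    proof cases
      case 1 then show ?thesis by simp
    next
      case 2 then show ?thesis using p by simp
    next
      case 3
      then have t: "t > 0" "t \<le> t0" by auto
      define m where "m = measure lborel {y. t \<le> \<rho> y}"
      have em: "emeasure lborel {y. 0 \<le> t \<and> t \<le> \<rho> y} = ennreal m"
        using level_bound(1)[OF t(1)] t by (simp add: m_def emeasure_eq_ennreal_measure)
      have m0: "m \<ge> 0" by (simp add: m_def)
      have mle: "m \<le> 1 / t" using level_le_inv[OF t(1)] by (simp add: m_def)
      have "p * t powr (p - 1) * m \<le> p * t powr (p - 1) * (1 / t)"
        using mle p by (intro mult_left_mono) auto
      also have "\<dots> = h1 t"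
      proof -
        have "t powr (p - 1) = t powr ((p - 2) + 1)" by simp
        also have "\<dots> = t powr (p - 2) * t powr 1" by (rule powr_add)
        finally have "t powr (p - 1) = t powr (p - 2) * t powr 1" .
        then show ?thesis using t by (simp add: h1_def)
      qed
      finally have "ennreal (p * t powr (p - 1)) * ennreal m \<le> ennreal (h1 t)"
        using m0 p by (simp add: ennreal_mult[symmetric] ennreal_leI)
      also have "\<dots> \<le> ennreal (h1 t) * indicator {0..t0} t + ennreal (h2 t) * indicator {t0..} t"
        using t by simp
      finally show ?thesis using em by simp
    next
      case 4
      then have t: "t > 0" "t > t0" using t0pos by auto
      define m where "m = measure lborel {y. t \<le> \<rho> y}"
      have em: "emeasure lborel {y. 0 \<le> t \<and> t \<le> \<rho> y} = ennreal m"
        using level_bound(1)[OF t(1)] t by (simp add: m_def emeasure_eq_ennreal_measure)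
      have m0: "m \<ge> 0" by (simp add: m_def)
      have "p * t powr (p - 1) * m \<le> h2 t"
      proof (cases "d = 1")
        case True
        then have "t > A" using t Apos by (simp add: t0_def powr_one)
        then have "m = 0" using level_bound_1[OF True] by (simp add: m_def)
        then show ?thesis using h2nn by simp
      next
        case False
        then have d1: "d > 1" using d_pos by simp
        have "m \<le> (A / t) powr q" using level_bound_d[OF d1 t(1)] by (simp add: m_def q_def)
        then have "p * t powr (p - 1) * m \<le> p * t powr (p - 1) * (A / t) powr q"
          using p by (intro mult_left_mono) auto
        also have "\<dots> = h2 t"
        proof -
          have "t powr (p - 1) * (A / t) powr q = A powr q * (t powr (p - 1) / t powr q)"
            by (simp add: powr_divide)
          also have "t powr (p - 1) / t powr q = t powr (p - 1 - q)" by (simp add: powr_diff)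
          finally show ?thesis using False by (simp add: h2_def)
        qed
        finally show ?thesis .
      qed
      then have "ennreal (p * t powr (p - 1)) * ennreal m \<le> ennreal (h2 t)"
        using m0 p by (simp add: ennreal_mult[symmetric] ennreal_leI)
      also have "\<dots> \<le> ennreal (h1 t) * indicator {0..t0} t + ennreal (h2 t) * indicator {t0..} t"
        using t by simp
      finally show ?thesis using em by simp
    qed
  qed
  have "(\<integral>\<^sup>+y. ennreal (\<rho> y powr p) \<partial>lborel)
     = (\<integral>\<^sup>+t. ennreal (p * t powr (p - 1)) * emeasure lborel {y. 0 \<le> t \<and> t \<le> \<rho> y} \<partial>lborel)"
    by (rule layer_cake[OF \<rho>_meas \<rho>_nonneg p])
  also have "\<dots> \<le> (\<integral>\<^sup>+t. ennreal (h1 t) * indicator {0..t0} t + ennreal (h2 t) * indicator {t0..} t \<partial>lborel)"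
    by (intro nn_integral_mono pw)
  also have "\<dots> = (\<integral>\<^sup>+t. ennreal (h1 t) * indicator {0..t0} t \<partial>lborel) + (\<integral>\<^sup>+t. ennreal (h2 t) * indicator {t0..} t \<partial>lborel)"
    by (intro nn_integral_add) (auto simp: h1_def h2_def)
  also have "(\<integral>\<^sup>+t. ennreal (h1 t) * indicator {0..t0} t \<partial>lborel) = ennreal (p * (t0 powr (p - 2 + 1) / (p - 2 + 1)))"
  proof (rule nn_integral_has_integral_lebesgue')
    show "(h1 has_integral p * (t0 powr (p - 2 + 1) / (p - 2 + 1))) {0..t0}"
      unfolding h1_def using p t0pos by (intro has_integral_mult_right has_integral_powr_from_0) auto
  qed (rule h1nn)
  also have "(\<integral>\<^sup>+t. ennreal (h2 t) * indicator {t0..} t \<partial>lborel)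
      = ennreal (if d = 1 then 0 else p * A powr q * (- (t0 powr (p - 1 - q + 1)) / (p - 1 - q + 1)))"
  proof (cases "d = 1")
    case True then show ?thesis by (simp add: h2_def)
  next
    case False
    then have d1: "real d > 1" using d_pos by simp
    have pq': "p < q" using pq False by (simp add: q_def)
    show ?thesis
    proof (rule nn_integral_has_integral_lebesgue')
      show "(h2 has_integral (if d = 1 then 0 else p * A powr q * (- (t0 powr (p - 1 - q + 1)) / (p - 1 - q + 1)))) {t0..}"
      proof -
        have hi: "((\<lambda>t. t powr (p - 1 - q)) has_integral - (t0 powr (p - 1 - q + 1)) / (p - 1 - q + 1)) {t0..}"
          by (rule has_integral_powr_to_inf) (use pq' t0pos in auto)
        have "h2 = (\<lambda>t. (p * A powr q) * t powr (p - 1 - q))" using False by (simp add: h2_def fun_eq_iff)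
        then show ?thesis using has_integral_mult_right[OF hi, of "p * A powr q"] False by simp
      qed
    qed (rule h2nn)
  qed
  also have "ennreal (p * (t0 powr (p - 2 + 1) / (p - 2 + 1))) +
      ennreal (if d = 1 then 0 else p * A powr q * (- (t0 powr (p - 1 - q + 1)) / (p - 1 - q + 1)))
    = ennreal ((p / (p - 1) + (if d = 1 then 0 else p / (real d / (real d - 1) - p))) * A powr (real d * (p - 1)))"
  proof -
    have e1: "p * (t0 powr (p - 2 + 1) / (p - 2 + 1)) = p / (p - 1) * A powr (real d * (p - 1))"
      by (simp add: t0_def powr_powr)
    have e2: "(if d = 1 then 0 else p * A powr q * (- (t0 powr (p - 1 - q + 1)) / (p - 1 - q + 1)))
        = (if d = 1 then 0 else p / (real d / (real d - 1) - p)) * A powr (real d * (p - 1))"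
    proof (cases "d = 1")
      case True then show ?thesis by simp
    next
      case False
      then have d1: "real d > 1" using d_pos by simp
      have pq': "p < q" using pq False by (simp add: q_def)
      have qd: "q * (real d - 1) = real d" using d1 by (simp add: q_def)
      have ex: "q + real d * (p - q) = real d * (p - 1)"
      proof -
        have "q + real d * (p - q) = real d * p - q * (real d - 1)" by (simp add: algebra_simps)
        also have "\<dots> = real d * (p - 1)" using qd by (simp add: algebra_simps)
        finally show ?thesis .
      qed
      have "A powr q * t0 powr (p - 1 - q + 1) = A powr (real d * (p - 1))"
        by (simp add: t0_def powr_powr powr_add[symmetric] ex[symmetric])
      then have "p * A powr q * (- (t0 powr (p - 1 - q + 1)) / (p - 1 - q + 1))
          = p / (q - p) * A powr (real d * (p - 1))"
        using pq' by (simp add: field_simps)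
      then show ?thesis using False by (simp add: q_def)
    qed
    have nn1: "p * (t0 powr (p - 2 + 1) / (p - 2 + 1)) \<ge> 0" using p by simp
    have nn2: "(if d = 1 then 0 else p * A powr q * (- (t0 powr (p - 1 - q + 1)) / (p - 1 - q + 1))) \<ge> 0"
    proof (cases "d = 1")
      case True then show ?thesis by simp
    next
      case False
      then have qp: "real d / (real d - 1) - p > 0" using pq by simp
      have eq: "(if d = 1 then 0 else p / (real d / (real d - 1) - p)) * A powr (real d * (p - 1))
          = p / (real d / (real d - 1) - p) * A powr (real d * (p - 1))" using False by simp
      have "p / (real d / (real d - 1) - p) * A powr (real d * (p - 1)) \<ge> 0"
        using qp p by (intro mult_nonneg_nonneg divide_nonneg_pos) auto
      with eq e2 show ?thesis by linarith
    qed
    have "ennreal (p * (t0 powr (p - 2 + 1) / (p - 2 + 1))) +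
      ennreal (if d = 1 then 0 else p * A powr q * (- (t0 powr (p - 1 - q + 1)) / (p - 1 - q + 1)))
      = ennreal (p * (t0 powr (p - 2 + 1) / (p - 2 + 1)) +
         (if d = 1 then 0 else p * A powr q * (- (t0 powr (p - 1 - q + 1)) / (p - 1 - q + 1))))"
      using nn1 nn2 by (rule ennreal_plus[symmetric])
    also have "p * (t0 powr (p - 2 + 1) / (p - 2 + 1)) +
         (if d = 1 then 0 else p * A powr q * (- (t0 powr (p - 1 - q + 1)) / (p - 1 - q + 1)))
       = (p / (p - 1) + (if d = 1 then 0 else p / (real d / (real d - 1) - p))) * A powr (real d * (p - 1))"
      unfolding e1 e2 by (rule distrib_right[symmetric])
    finally show ?thesis .
  qed
  finally show ?thesis .
qed

end


lemma Ioc_disj: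
  fixes a b a' b' :: real
  assumes "a < b" "a' < b'" "{a<..<b} \<inter> {a'<..<b'} = {}"
  shows "{a<..b} \<inter> {a'<..b'} = {}"
proof (rule ccontr)
  assume "{a<..b} \<inter> {a'<..b'} \<noteq> {}"
  then obtain x where "x \<in> {a<..b}" "x \<in> {a'<..b'}" by blast
  then have x: "a < x" "x \<le> b" "a' < x" "x \<le> b'" by auto
  define y where "y = (max a a' + x) / 2"
  have "y \<in> {a<..<b} \<inter> {a'<..<b'}" using x unfolding y_def by (auto simp: max_def)
  with assms(3) show False by blast
qed

lemma sigma_pos:
  fixes M :: "'a measure" and f :: "'a \<Rightarrow> real"
  assumes M: "prob_space M" and fm: "f \<in> borel_measurable M" and f2: "integrable M (\<lambda>x. (f x)\<^sup>2)"
    and nc: "\<not> (\<exists>c. AE x in M. f x = c)"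
  shows "sigma_f M f > 0"
proof -
  interpret prob_space M by (rule M)
  have fi: "integrable M f" using square_integrable_imp_integrable[OF fm f2] .
  define c where "c = (\<integral>y. f y \<partial>M)"
  have eq: "(\<lambda>x. (f x - c)\<^sup>2) = (\<lambda>x. (f x)\<^sup>2 - 2 * c * f x + c\<^sup>2)"
    by (auto simp: power2_diff fun_eq_iff algebra_simps)
  have gi: "integrable M (\<lambda>x. (f x - c)\<^sup>2)" unfolding eq
    using f2 fi by (intro Bochner_Integration.integrable_add Bochner_Integration.integrable_diff integrable_mult_right) auto
  have "(\<integral>x. (f x - c)\<^sup>2 \<partial>M) \<noteq> 0"
  proof
    assume "(\<integral>x. (f x - c)\<^sup>2 \<partial>M) = 0"
    then have "AE x in M. (f x - c)\<^sup>2 = 0" using integral_nonneg_eq_0_iff_AE[OF gi] by auto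
    then have "AE x in M. f x = c" by eventually_elim simp
    with nc show False by blast
  qed
  moreover have "(\<integral>x. (f x - c)\<^sup>2 \<partial>M) \<ge> 0" by (rule integral_nonneg_AE) auto
  ultimately have "(\<integral>x. (f x - c)\<^sup>2 \<partial>M) > 0" by linarith
  then show ?thesis unfolding sigma_f_def c_def[symmetric] by simp
qed


theorem corollary5p2:
  fixes d :: nat and C :: real and M :: "'a::locally_convex_space measure"
    and f :: "'a \<Rightarrow> real" and \<rho> :: "real \<Rightarrow> real" and p :: real
  assumes d_pos: "d \<ge> 1"
    and hypC: "\<forall>(N::'a measure) g \<phi>. prob_space N \<and> radon_measure N \<and> log_concave N \<and>
                 g \<in> Pd N d \<and> Cb_inf \<phi> \<and> (\<forall>x. \<bar>\<phi> x\<bar> \<le> 1) \<longrightarrow>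
                 sigma_f N g powr (1 / real d) * (\<integral>x. deriv \<phi> (g x) \<partial>N)
                   \<le> C * sup_norm (deriv \<phi>) powr (1 - 1 / real d)"
    and M_prob: "prob_space M" and M_radon: "radon_measure M" and M_lc: "log_concave M"
    and f_Pd: "f \<in> Pd M d"
    and f_nonconst: "\<not> (\<exists>c. AE x in M. f x = c)"
    and \<rho>_meas: "\<rho> \<in> borel_measurable borel" and \<rho>_nonneg: "\<forall>x. \<rho> x \<ge> 0"
    and \<rho>_density: "distr M lborel f = density lborel (\<lambda>x. ennreal (\<rho> x))"
    and p_gt1: "1 < p"
    and p_lt: "d = 1 \<or> p < real d / (real d - 1)"
  shows "integrable lborel (\<lambda>x. \<rho> x powr p) \<and>
         sigma_f M f powr (1 - 1 / p) * (\<integral>x. \<rho> x powr p \<partial>lborel) powr (1 / p)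
           \<le> (p / (p - 1) + (if d = 1 then 0 else p / (real d / (real d - 1) - p))) powr (1 / p)
              * C powr (real d * (1 - 1 / p))"
proof -
  interpret Mp: prob_space M by (rule M_prob)
  have fm: "f \<in> borel_measurable M" and f2: "integrable M (\<lambda>x. (f x)\<^sup>2)"
    using f_Pd unfolding Pd_def by auto
  define \<sigma> where "\<sigma> = sigma_f M f"
  have \<sigma>pos: "\<sigma> > 0" unfolding \<sigma>_def by (rule sigma_pos[OF M_prob fm f2 f_nonconst])
  define S where "S = \<sigma> powr (1 / real d)"
  have Spos: "S > 0" using \<sigma>pos by (simp add: S_def)
  define r where "r = 1 - 1 / real d"
  have rnn: "r \<ge> 0" using d_pos by (simp add: r_def)
  have H: "S * (\<integral>x. deriv \<phi> (f x) \<partial>M) \<le> C * sup_norm (deriv \<phi>) powr r"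
    if "Cb_inf \<phi>" "\<forall>x. \<bar>\<phi> x\<bar> \<le> 1" for \<phi>
  proof -
    have "sigma_f M f powr (1 / real d) * (\<integral>x. deriv \<phi> (f x) \<partial>M) \<le> C * sup_norm (deriv \<phi>) powr (1 - 1 / real d)"
      by (rule hypC[rule_format, of M f \<phi>]) (use M_prob M_radon M_lc f_Pd that in blast)
    then show ?thesis unfolding S_def \<sigma>_def r_def .
  qed
  define Cp where "Cp = max C 0"
  have Cpnn: "Cp \<ge> 0" by (simp add: Cp_def)
  define A where "A = Cp / (S * 2 powr (1 / real d))"
  have Ann: "A \<ge> 0" using Cpnn Spos by (simp add: A_def)
  define N where "N = distr M lborel f"
  have fml: "f \<in> measurable M lborel" using fm by simp
  have hypF: "measure N (\<Union>K\<in>F. {Inf K<..<Sup K}) \<le> A * (\<Sum>K\<in>F. Sup K - Inf K) powr (1 / real d)"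
    if fin: "finite F" and ne: "F \<noteq> {}" and lt: "\<forall>K\<in>F. Inf K < Sup K"
      and pw: "pairwise (\<lambda>K K'. {Inf K<..<Sup K} \<inter> {Inf K'<..<Sup K'} = {}) F" for F :: "real set set"
  proof -
    define L where "L = (\<Sum>K\<in>F. Sup K - Inf K)"
    have Lpos: "L > 0" unfolding L_def using fin ne lt by (intro sum_pos) auto
    have disj: "disjoint_family_on (\<lambda>K. {Inf K<..Sup K}) F"
      unfolding disjoint_family_on_def
    proof (intro ballI impI)
      fix K K' assume "K \<in> F" "K' \<in> F" "K \<noteq> K'"
      then have dj: "{Inf K<..<Sup K} \<inter> {Inf K'<..<Sup K'} = {}" using pw by (auto simp: pairwise_def)
      show "{Inf K<..Sup K} \<inter> {Inf K'<..Sup K'} = {}"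
        by (rule Ioc_disj[OF _ _ dj]) (use lt \<open>K \<in> F\<close> \<open>K' \<in> F\<close> in auto)
    qed
    define U where "U = (\<Union>K\<in>F. {Inf K<..<Sup K})"
    have Ub: "U \<in> sets borel" unfolding U_def by (intro borel_open open_UN) auto
    have B: "S * (2 / L * measure M {x\<in>space M. f x \<in> U}) \<le> Cp * (2 / L) powr r"
      unfolding U_def Cp_def
      by (rule partB[OF M_prob fm less_imp_le[OF Spos] rnn H fin ne lt disj L_def])
    have meq: "measure N U = measure M {x\<in>space M. f x \<in> U}"
      unfolding N_def using measure_distr[OF fml, of U] Ub
      by (simp add: vimage_def Int_def conj_commute)
    have pr: "(2 / L) powr r = (2 / L) * (L powr (1 / real d) / 2 powr (1 / real d))"
    proof -
      have "(2 / L) powr r = (2 / L) powr (1 + - (1 / real d))" by (simp add: r_def)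
      also have "\<dots> = (2 / L) powr 1 * (2 / L) powr (- (1 / real d))" by (rule powr_add)
      also have "\<dots> = (2 / L) * inverse ((2 / L) powr (1 / real d))" using Lpos by (simp add: powr_minus)
      also have "\<dots> = (2 / L) * (L powr (1 / real d) / 2 powr (1 / real d))" by (simp add: powr_divide)
      finally show ?thesis .
    qed
    have "(S * (2 / L)) * measure N U \<le> (S * (2 / L)) * (A * L powr (1 / real d))"
    proof -
      have "(S * (2 / L)) * measure N U = S * (2 / L * measure M {x\<in>space M. f x \<in> U})" using meq by simp
      also note B
      also have "Cp * (2 / L) powr r = (S * (2 / L)) * (A * L powr (1 / real d))"
        unfolding pr A_def using Spos Lpos by (simp add: field_simps)
      finally show ?thesis .
    qed
    then have "measure N U \<le> A * L powr (1 / real d)"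
      using Spos Lpos by (subst (asm) mult_le_cancel_left_pos) auto
    then show ?thesis unfolding U_def L_def .
  qed
  have Nprob: "prob_space N" unfolding N_def using fml by (rule Mp.prob_space_distr)
  have N_eq: "N = density lborel (\<lambda>x. ennreal (\<rho> x))" using \<rho>_density by (simp add: N_def)
  have rnn: "\<And>x. 0 \<le> \<rho> x" using \<rho>_nonneg by simp
  have pcI: "pc N \<rho> A d"
  proof (unfold pc_def, intro conjI allI impI)
    show "N = density lborel (\<lambda>x. ennreal (\<rho> x))" by (rule N_eq)
    show "\<rho> \<in> borel_measurable borel" by (rule \<rho>_meas)
    show "0 \<le> \<rho> x" for x by (rule rnn)
    show "prob_space N" by (rule Nprob)
    show "0 \<le> A" by (rule Ann)
    show "1 \<le> d" by (rule d_pos)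
    fix F :: "real set set"
    assume "finite F" "F \<noteq> {}" "\<forall>K\<in>F. Inf K < Sup K"
      "pairwise (\<lambda>K K'. {Inf K<..<Sup K} \<inter> {Inf K'<..<Sup K'} = {}) F"
    then show "measure N (\<Union>K\<in>F. {Inf K<..<Sup K}) \<le> A * (\<Sum>K\<in>F. Sup K - Inf K) powr (1 / real d)"
      by (rule hypF)
  qed
  interpret pc N \<rho> A d by (rule pcI)
  define Kc where "Kc = p / (p - 1) + (if d = 1 then 0 else p / (real d / (real d - 1) - p))"
  have Kcpos: "Kc > 0"
  proof -
    have "p / (p - 1) > 0" using p_gt1 by simp
    moreover have "(if d = 1 then 0 else p / (real d / (real d - 1) - p)) \<ge> 0"
      using p_lt p_gt1 by auto
    ultimately show ?thesis unfolding Kc_def by linarith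
  qed
  define V where "V = Kc * A powr (real d * (p - 1))"
  have Vnn: "V \<ge> 0" using Kcpos by (simp add: V_def)
  have LB: "(\<integral>\<^sup>+y. ennreal (\<rho> y powr p) \<partial>lborel) \<le> ennreal V"
    unfolding V_def Kc_def by (rule Lp_bound[OF p_gt1 p_lt])
  have rpm: "(\<lambda>x. \<rho> x powr p) \<in> borel_measurable lborel" using \<rho>_meas by measurable
  have int: "integrable lborel (\<lambda>x. \<rho> x powr p)"
  proof (rule integrableI_nonneg[OF rpm])
    show "AE x in lborel. 0 \<le> \<rho> x powr p" by simp
    show "(\<integral>\<^sup>+x. ennreal (\<rho> x powr p) \<partial>lborel) < \<infinity>" using LB by (simp add: le_less_trans)
  qed
  define I where "I = (\<integral>x. \<rho> x powr p \<partial>lborel)"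
  have Inn: "I \<ge> 0" unfolding I_def by (rule integral_nonneg_AE) simp
  have IV: "I \<le> V"
  proof -
    have "I = enn2real (\<integral>\<^sup>+x. ennreal (\<rho> x powr p) \<partial>lborel)"
      unfolding I_def using rpm by (intro integral_eq_nn_integral) auto
    also have "\<dots> \<le> enn2real (ennreal V)" using LB by (intro enn2real_mono) auto
    also have "\<dots> = V" using Vnn by simp
    finally show ?thesis .
  qed
  have Apos: "A > 0" by (rule A_pos)
  then have CpC: "Cp = C" and Cpos: "C > 0" using Spos unfolding A_def Cp_def
    by (auto simp: max_def split: if_splits)
  define a where "a = 1 - 1 / p"
  have apos: "a > 0" using p_gt1 by (simp add: a_def)
  define e where "e = real d * a"
  have dr: "real d > 0" using d_pos by simp
  have "\<sigma> powr a * I powr (1 / p) \<le> \<sigma> powr a * V powr (1 / p)"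
    using Inn IV p_gt1 by (intro mult_left_mono powr_mono2) auto
  also have "V powr (1 / p) = Kc powr (1 / p) * A powr e"
  proof -
    have "V powr (1 / p) = Kc powr (1 / p) * (A powr (real d * (p - 1))) powr (1 / p)"
      by (simp add: V_def powr_mult)
    also have "(A powr (real d * (p - 1))) powr (1 / p) = A powr e"
      using p_gt1 by (simp add: powr_powr e_def a_def field_simps)
    finally show ?thesis .
  qed
  also have "A powr e = C powr e / (\<sigma> powr a * 2 powr a)"
  proof -
    have "A powr e = Cp powr e / ((S powr e) * (2 powr (1 / real d)) powr e)"
      by (simp add: A_def powr_divide powr_mult)
    also have "S powr e = \<sigma> powr a" using dr by (simp add: S_def powr_powr e_def)
    also have "(2 powr (1 / real d)) powr e = 2 powr a" using dr by (simp add: powr_powr e_def)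
    finally show ?thesis using CpC by simp
  qed
  also have "\<sigma> powr a * (Kc powr (1 / p) * (C powr e / (\<sigma> powr a * 2 powr a)))
      = Kc powr (1 / p) * C powr e / 2 powr a"
    using \<sigma>pos by (simp add: field_simps)
  also have "\<dots> \<le> Kc powr (1 / p) * C powr e"
  proof -
    have "2 powr a \<ge> 1" using apos by (simp add: ge_one_powr_ge_zero)
    moreover have "Kc powr (1 / p) * C powr e \<ge> 0" by simp
    ultimately have "Kc powr (1 / p) * C powr e / 2 powr a \<le> Kc powr (1 / p) * C powr e / 1"
      by (intro divide_left_mono) auto
    then show ?thesis by simp
  qed
  finally have final: "\<sigma> powr a * I powr (1 / p) \<le> Kc powr (1 / p) * C powr e" .
  show ?thesis
  proof (intro conjI)
    show "integrable lborel (\<lambda>x. \<rho> x powr p)" by (rule int)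
    show "sigma_f M f powr (1 - 1 / p) * (\<integral>x. \<rho> x powr p \<partial>lborel) powr (1 / p)
           \<le> (p / (p - 1) + (if d = 1 then 0 else p / (real d / (real d - 1) - p))) powr (1 / p)
              * C powr (real d * (1 - 1 / p))"
      using final unfolding \<sigma>_def I_def Kc_def e_def a_def .
  qed
qed


end
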